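(* Let $n\ge2$, let $x_1=0$ and let $x_2,\dots,x_n$ be arbitrary real numbers. Then for every $\alpha>0$, $$\frac{\sum_{i=1}^n x_ie^{-\alpha x_i}}{\sum_{j=1}^n e^{-\alpha x_j}}\le\frac{\ln n}{\alpha}.$$ *)

theory Defs
  imports Complex_Main
begin

end

theory Submission
  imports Defs
begin

lemma pt:
  fixes Z N a y :: real
  assumes "Z > 0" "N > 0"
  shows "exp (- y) * (y + ln Z - ln N) \<le> Z / N - exp (- y)"
proof -
  have t: "Z / (N * exp (- y)) > 0" using assms by simp
  have "ln (Z / (N * exp (- y))) \<le> Z / (N * exp (- y)) - 1"
    using ln_le_minus_one[OF t] .
  moreover have "ln (Z / (N * exp (- y))) = y + ln Z - ln N"
    using assms by (simp add: ln_div ln_mult)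
  ultimately have "y + ln Z - ln N \<le> Z / (N * exp (- y)) - 1" by simp
  hence "exp (- y) * (y + ln Z - ln N) \<le> exp (- y) * (Z / (N * exp (- y)) - 1)"
    by (simp add: mult_left_mono)
  also have "\<dots> = Z / N - exp (- y)" by (simp add: field_simps)
  finally show ?thesis .
qed

theorem lemma4:
  fixes n :: nat and x :: "nat \<Rightarrow> real" and \<alpha> :: real
  assumes "n \<ge> 2" and "x 1 = 0" and "\<alpha> > 0"
  shows "(\<Sum>i=1..n. x i * exp (- \<alpha> * x i)) / (\<Sum>j=1..n. exp (- \<alpha> * x j)) \<le> ln (real n) / \<alpha>"
proof -
  define Z where "Z = (\<Sum>j=1..n. exp (- \<alpha> * x j))"
  define S where "S = (\<Sum>i=1..n. x i * exp (- \<alpha> * x i))"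
  have "Z = exp (- \<alpha> * x 1) + (\<Sum>j\<in>{1..n}-{1}. exp (- \<alpha> * x j))"
    unfolding Z_def using assms(1) by (subst sum.remove[of _ 1]) auto
  moreover have "(\<Sum>j\<in>{1..n}-{1}. exp (- \<alpha> * x j)) \<ge> 0" by (rule sum_nonneg) simp
  ultimately have Z1: "Z \<ge> 1" using assms(2) by simp
  hence Zp: "Z > 0" by simp
  have Np: "real n > 0" using assms(1) by simp
  have "(\<Sum>i=1..n. exp (- (\<alpha> * x i)) * (\<alpha> * x i + ln Z - ln n))
        \<le> (\<Sum>i=1..n. Z / n - exp (- (\<alpha> * x i)))"
    by (rule sum_mono) (rule pt[OF Zp Np])
  also have "\<dots> = 0" using Np by (simp add: sum_subtractf Z_def)
  finally have "(\<Sum>i=1..n. exp (- (\<alpha> * x i)) * (\<alpha> * x i + ln Z - ln n)) \<le> 0" .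
  moreover have "(\<Sum>i=1..n. exp (- (\<alpha> * x i)) * (\<alpha> * x i + ln Z - ln n))
      = \<alpha> * S + Z * (ln Z - ln n)"
    unfolding S_def Z_def
    by (simp add: algebra_simps sum.distrib sum_distrib_left sum_distrib_right sum_subtractf)
  ultimately have "\<alpha> * S \<le> Z * (ln n - ln Z)" by (simp add: algebra_simps)
  also have "\<dots> \<le> Z * ln n" using Z1 Zp by (simp add: mult_left_mono)
  finally have "\<alpha> * S \<le> Z * ln n" .
  thus ?thesis unfolding S_def[symmetric] Z_def[symmetric] using Zp assms(3)
    by (simp add: divide_simps mult.commute)
qed

end
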